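(* Run the mechanism BFM-SWM described in the context with $\ell=2$ and arbitrary $B>0$, $\alpha>1$, $\beta>1$, $\epsilon>0$, with all sellers behaving truthfully, and let $S_{i,t}$ ($i\in\{1,2\}$, $t\in[M]$), $\rho_M$, $u^*$ be as defined in the context. Let $O$ be an optimal solution of $\max\{v(S)-c(S): S\subseteq\mathcal{N},\ c(S)\le B\}$. Then $$v(O)-2\beta\cdot c(O)\ \le\ 2\rho_M+2\sum_{i=1}^{2}\sum_{t=1}^{M}v(S_{i,t})+2v(u^* ).$$
   Context: Setting. $\mathcal{N}$ is a finite set of $n$ sellers. The valuation $v:2^{\mathcal{N}}\to\mathbb{R}_{\ge 0}$ satisfies $v(\emptyset)=0$ and is submodular (for $X\subseteq Y\subseteq\mathcal{N}$ and $u\notin Y$, $v(u\mid Y)\le v(u\mid X)$), not necessarily monotone, where $v(S\mid T)=v(S\cup T)-v(T)$, $v(u\mid T)=v(\{u\}\mid T)$. Each seller $u$ has a private cost $c(u)\ge 0$; $c(X)=\sum_{u\in X}c(u)$, $p(X)=\sum_{u\in X}p(u)$. $B>0$ is the budget, $[\ell]=\{1,\dots,\ell\}$. Sellers behave truthfully: a seller $u$ offered price $q$ accepts iff $c(u)\le q$. Mechanism BFM-SWM (inputs $B$, $\alpha>1$, $\beta>1$, $\epsilon>0$, $\ell\in\{1,2\}$): 1. Offer every seller the price $B$; let $R$ be the set of sellers who accept, and set $p(u)=B$ for $u\in R$. 2. Set $t=0$, $\rho_0=\epsilon/\alpha$, $u^*=\emptyset$ ($u^*$ is a set of at most one seller),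 and $S_{i,0}=\emptyset$ for $i\in[\ell]$. 3. Repeat rounds: set $t\leftarrow t+1$, $\rho_t=\alpha\rho_{t-1}$, $S_{i,t}=\emptyset$ for all $i\in[\ell]$. Process the sellers $u\in R\setminus(\bigcup_{i=1}^{\ell}S_{i,t-1}\cup u^* )$ one at a time in a fixed order. For each such $u$: pick $j\in\arg\max_{i\in[\ell]}v(u\mid S_{i,t})$ (current contents); update $p(u)\leftarrow\min\{p(u),\ v(u\mid S_{j,t})/(\beta+\rho_t/B)\}$ and offer $p(u)$ to $u$. If $u$ accepts: if $v(S_{j,t}\cup\{u\})-p(S_{j,t}\cup\{u\})>\rho_t$ (current prices), set $u^*\leftarrow\{u\}$ and end the round immediately; otherwise add $u$ to $S_{j,t}$. If $u$ rejects, remove $u$ from $R$. After the round, stop if $R\setminus\left(\bigcup_{i=1}^{\ell}(S_{i,t-1}\cup S_{i,t})\cup u^*\right)=\emptyset$; otherwise start another round. 4. Let $M$ be the final value of $t$. Output $S^*\in\arg\max_{A\in\{S_{i,t}: i\in[\ell],\ t\in\{M-1,M\}\}\cup\{u^*\}}\big(v(A)-p(A)\big)$, paying each $u\in S^*$ its current price $p(u)$. Notation: $S_{i,t}$ denotes the contents of that candidate set at the end of round $t$; $\rho_M$ is the threshold of the last round; $u^*$ denotes its value at termination (possibly $\emptyset$, with $v(\emptyset)=0$). *)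

theory Defs
  imports Main "HOL.Real"
begin

text \<open>Mechanism BFM-SWM with ell = 2. The ground set of sellers is set order,
  where the list order is the fixed processing order.\<close>

record 'a bfm_state =
  Rs :: "'a set"
  prc :: "'a \<Rightarrow> real"
  S1 :: "'a set"
  S2 :: "'a set"
  ust :: "'a set"
  stopd :: bool

definition marg :: "('a set \<Rightarrow> real) \<Rightarrow> 'a \<Rightarrow> 'a set \<Rightarrow> real" where
  "marg v u T = v (insert u T) - v T"

definition rho :: "real \<Rightarrow> real \<Rightarrow> nat \<Rightarrow> real" where
  "rho eps alpha t = eps / alpha * alpha ^ t"

definition bfm_step ::
  "('a set \<Rightarrow> real) \<Rightarrow> ('a \<Rightarrow> real) \<Rightarrow> real \<Rightarrow> real \<Rightarrow>
   (nat \<Rightarrow> 'a set \<Rightarrow> 'a set \<Rightarrow> 'a \<Rightarrow> bool) \<Rightarrow> nat \<Rightarrow> real \<Rightarrow>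
   'a \<Rightarrow> 'a bfm_state \<Rightarrow> 'a bfm_state" where
  "bfm_step v c B beta tie t r u s =
    (if stopd s then s else
     (let j1 = (marg v u (S1 s) > marg v u (S2 s) \<or>
                (marg v u (S1 s) = marg v u (S2 s) \<and> tie t (S1 s) (S2 s) u));
          Sj = (if j1 then S1 s else S2 s);
          q = min (prc s u) (marg v u Sj / (beta + r / B));
          p' = (prc s)(u := q)
      in if c u \<le> q then
           (if v (insert u Sj) - sum p' (insert u Sj) > r
            then s\<lparr>prc := p', ust := {u}, stopd := True\<rparr>
            else if j1 then s\<lparr>prc := p', S1 := insert u Sj\<rparr>
            else s\<lparr>prc := p', S2 := insert u Sj\<rparr>)
         else s\<lparr>prc := p', Rs := Rs s - {u}\<rparr>))"

text \<open>Round t, started from the state at the end of round t-1 (whose S1, S2 are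
  S_{1,t-1}, S_{2,t-1}). Returns the state at the end of round t.\<close>
definition bfm_round ::
  "'a list \<Rightarrow> ('a set \<Rightarrow> real) \<Rightarrow> ('a \<Rightarrow> real) \<Rightarrow> real \<Rightarrow> real \<Rightarrow> real \<Rightarrow> real \<Rightarrow>
   (nat \<Rightarrow> 'a set \<Rightarrow> 'a set \<Rightarrow> 'a \<Rightarrow> bool) \<Rightarrow> nat \<Rightarrow> 'a bfm_state \<Rightarrow> 'a bfm_state" where
  "bfm_round order v c B alpha beta eps tie t s =
    (let L = filter (\<lambda>u. u \<in> Rs s - (S1 s \<union> S2 s \<union> ust s)) order;
         s0 = s\<lparr>S1 := {}, S2 := {}, stopd := False\<rparr>
     in fold (bfm_step v c B beta tie t (rho eps alpha t)) L s0)"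

text \<open>State at the end of round t (t = 0: after step 2).\<close>
primrec bfm ::
  "'a list \<Rightarrow> ('a set \<Rightarrow> real) \<Rightarrow> ('a \<Rightarrow> real) \<Rightarrow> real \<Rightarrow> real \<Rightarrow> real \<Rightarrow> real \<Rightarrow>
   (nat \<Rightarrow> 'a set \<Rightarrow> 'a set \<Rightarrow> 'a \<Rightarrow> bool) \<Rightarrow> nat \<Rightarrow> 'a bfm_state" where
  "bfm order v c B alpha beta eps tie 0 =
     \<lparr>Rs = {u \<in> set order. c u \<le> B}, prc = (\<lambda>_. B), S1 = {}, S2 = {}, ust = {}, stopd = False\<rparr>"
| "bfm order v c B alpha beta eps tie (Suc t) =
     bfm_round order v c B alpha beta eps tie (Suc t) (bfm order v c B alpha beta eps tie t)"

text \<open>Stopping test after round t (t \<ge> 1).\<close>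
definition bfm_stops ::
  "'a list \<Rightarrow> ('a set \<Rightarrow> real) \<Rightarrow> ('a \<Rightarrow> real) \<Rightarrow> real \<Rightarrow> real \<Rightarrow> real \<Rightarrow> real \<Rightarrow>
   (nat \<Rightarrow> 'a set \<Rightarrow> 'a set \<Rightarrow> 'a \<Rightarrow> bool) \<Rightarrow> nat \<Rightarrow> bool" where
  "bfm_stops order v c B alpha beta eps tie t =
    (let s' = bfm order v c B alpha beta eps tie (t - 1);
         s = bfm order v c B alpha beta eps tie t
     in Rs s - (S1 s' \<union> S2 s' \<union> S1 s \<union> S2 s \<union> ust s) = {})"

definition submodular_on :: "'a set \<Rightarrow> ('a set \<Rightarrow> real) \<Rightarrow> bool" where
  "submodular_on N v = (\<forall>X Y u. X \<subseteq> Y \<and> Y \<subseteq> N \<and> u \<in> N - Y \<longrightarrow>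
      v (insert u Y) - v Y \<le> v (insert u X) - v X)"

end

theory Submission
  imports Defs
begin

locale bfmL =
  fixes order :: "'a list" and v :: "'a set \<Rightarrow> real" and c :: "'a \<Rightarrow> real"
    and B beta :: real and tie :: "nat \<Rightarrow> 'a set \<Rightarrow> 'a set \<Rightarrow> 'a \<Rightarrow> bool"
  assumes v0: "v {} = 0"
    and vnn: "\<And>S. S \<subseteq> set order \<Longrightarrow> v S \<ge> 0"
    and sm: "submodular_on (set order) v"
    and cnn: "\<And>u. u \<in> set order \<Longrightarrow> c u \<ge> 0"
    and Bpos: "B > 0" and bpos: "beta > 1" and dist: "distinct order"
begin

abbreviation N where "N \<equiv> set order"

lemma sub: "X \<subseteq> Y \<Longrightarrow> Y \<subseteq> N \<Longrightarrow> u \<in> N \<Longrightarrow> u \<notin> Y \<Longrightarrow> marg v u Y \<le> marg v u X"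
  using sm unfolding submodular_on_def marg_def by blast

definition PP :: "'a set \<Rightarrow> 'a set \<Rightarrow> bool" where
  "PP A C \<longleftrightarrow> (\<forall>T\<subseteq>C. v (A \<union> T) \<le> v A + v C)"

lemma add_lemma:
  assumes "A \<inter> C = {}" "A \<subseteq> N" "C \<subseteq> N" "u \<in> N" "u \<notin> A" "u \<notin> C"
    "marg v u A \<ge> 0" "marg v u C \<le> marg v u A" "PP A C" "PP C A"
  shows "PP (insert u A) C" "PP C (insert u A)"
proof -
  show "PP (insert u A) C" unfolding PP_def
  proof (intro allI impI)
    fix T assume T: "T \<subseteq> C"
    have e1: "v (insert u A \<union> T) = v (A \<union> T) + marg v u (A \<union> T)" by (simp add: marg_def)
    have e2: "marg v u (A \<union> T) \<le> marg v u A" using sub[of A "A \<union> T" u] T assms by auto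
    have e3: "v (A \<union> T) \<le> v A + v C" using assms(9) T unfolding PP_def by auto
    show "v (insert u A \<union> T) \<le> v (insert u A) + v C" using e1 e2 e3 by (simp add: marg_def)
  qed
  show "PP C (insert u A)" unfolding PP_def
  proof (intro allI impI)
    fix T assume T: "T \<subseteq> insert u A"
    show "v (C \<union> T) \<le> v C + v (insert u A)"
    proof (cases "u \<in> T")
      case False
      then have "T \<subseteq> A" using T by auto
      then have "v (C \<union> T) \<le> v C + v A" using assms(10) unfolding PP_def by auto
      then show ?thesis using assms(7) by (simp add: marg_def)
    next
      case True
      define T0 where "T0 = T - {u}"
      have T0: "T0 \<subseteq> A" "T = insert u T0" using T True T0_def by auto
      have e1: "v (C \<union> T) = v (C \<union> T0) + marg v u (C \<union> T0)" using T0 by (simp add: marg_def)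
      have e2: "marg v u (C \<union> T0) \<le> marg v u C" using sub[of C "C \<union> T0" u] T0 assms by auto
      have e3: "v (C \<union> T0) \<le> v C + v A" using assms(10) T0 unfolding PP_def by auto
      show ?thesis using e1 e2 e3 assms(8) by (simp add: marg_def)
    qed
  qed
qed

definition Inv :: "real \<Rightarrow> 'a set \<Rightarrow> 'a bfm_state \<Rightarrow> bool" where
  "Inv k R0 s \<longleftrightarrow> S1 s \<inter> S2 s = {} \<and> S1 s \<subseteq> N \<and> S2 s \<subseteq> N \<and> PP (S1 s) (S2 s) \<and> PP (S2 s) (S1 s)
    \<and> Rs s \<subseteq> R0 \<and> (\<forall>w\<in>Rs s. c w \<le> prc s w) \<and> ust s \<subseteq> N \<and> (ust s = {} \<or> (\<exists>w. ust s = {w}))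
    \<and> (\<forall>w\<in>R0 - Rs s. w \<notin> S1 s \<union> S2 s \<and> marg v w (S1 s) \<le> k * c w \<and> marg v w (S2 s) \<le> k * c w)"

lemma InvI: "S1 s \<inter> S2 s = {} \<Longrightarrow> S1 s \<subseteq> N \<Longrightarrow> S2 s \<subseteq> N \<Longrightarrow> PP (S1 s) (S2 s) \<Longrightarrow> PP (S2 s) (S1 s)
    \<Longrightarrow> Rs s \<subseteq> R0 \<Longrightarrow> (\<forall>w\<in>Rs s. c w \<le> prc s w) \<Longrightarrow> ust s \<subseteq> N \<Longrightarrow> (ust s = {} \<or> (\<exists>w. ust s = {w}))
    \<Longrightarrow> (\<forall>w\<in>R0 - Rs s. w \<notin> S1 s \<union> S2 s \<and> marg v w (S1 s) \<le> k * c w \<and> marg v w (S2 s) \<le> k * c w) \<Longrightarrow> Inv k R0 s"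
  unfolding Inv_def by blast

lemma step:
  fixes t :: nat
  assumes r: "r > 0" and R0: "R0 \<subseteq> N" and I: "Inv (beta + r/B) R0 s"
    and u: "u \<in> Rs s" "u \<in> N" "u \<notin> S1 s \<union> S2 s"
  defines "s' \<equiv> bfm_step v c B beta tie t r u s"
  shows "Inv (beta + r/B) R0 s'" "Rs s - {u} \<subseteq> Rs s'" "S1 s' \<union> S2 s' \<subseteq> insert u (S1 s \<union> S2 s)"
proof -
  define k where "k = beta + r / B"
  have kpos: "k > 0" using r Bpos bpos unfolding k_def by (smt (verit) divide_pos_pos)
  define m1 where "m1 = marg v u (S1 s)"
  define m2 where "m2 = marg v u (S2 s)"
  define j1 where "j1 = (m1 > m2 \<or> (m1 = m2 \<and> tie t (S1 s) (S2 s) u))"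
  define Sj where "Sj = (if j1 then S1 s else S2 s)"
  define q where "q = min (prc s u) (marg v u Sj / k)"
  define p' where "p' = (prc s)(u := q)"
  have s'_eq: "s' = (if stopd s then s else if c u \<le> q then
       (if v (insert u Sj) - sum p' (insert u Sj) > r then s\<lparr>prc := p', ust := {u}, stopd := True\<rparr>
        else if j1 then s\<lparr>prc := p', S1 := insert u Sj\<rparr> else s\<lparr>prc := p', S2 := insert u Sj\<rparr>)
       else s\<lparr>prc := p', Rs := Rs s - {u}\<rparr>)"
    unfolding s'_def bfm_step_def Let_def m1_def m2_def j1_def Sj_def q_def p'_def k_def marg_def
    by (simp only:)
  have mSj: "m1 \<le> marg v u Sj" "m2 \<le> marg v u Sj"
    unfolding Sj_def j1_def using m1_def m2_def by auto
  have Iu: "S1 s \<inter> S2 s = {}" "S1 s \<subseteq> N" "S2 s \<subseteq> N" "PP (S1 s) (S2 s)" "PP (S2 s) (S1 s)"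
    "Rs s \<subseteq> R0" "\<forall>w\<in>Rs s. c w \<le> prc s w" "ust s \<subseteq> N" "ust s = {} \<or> (\<exists>w. ust s = {w})"
    "\<forall>w\<in>R0 - Rs s. w \<notin> S1 s \<union> S2 s \<and> marg v w (S1 s) \<le> k * c w \<and> marg v w (S2 s) \<le> k * c w"
    using I unfolding Inv_def k_def by auto
  have cu: "c u \<le> prc s u" using Iu(7) u by auto
  have cu0: "c u \<ge> 0" using cnn u by auto
  have prc_ok: "c u \<le> q \<Longrightarrow> \<forall>w\<in>Rs s. c w \<le> p' w" using Iu(7) unfolding p'_def by auto
  have acc_m: "c u \<le> q \<Longrightarrow> marg v u Sj \<ge> 0"
  proof -
    assume "c u \<le> q"
    then have "0 \<le> marg v u Sj / k" using cu0 unfolding q_def by linarith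
    then show ?thesis using kpos by (simp add: zero_le_divide_iff)
  qed
  have ins_old: "\<And>A w. A \<subseteq> N \<Longrightarrow> w \<in> R0 - Rs s \<Longrightarrow> w \<notin> A \<Longrightarrow> marg v w (insert u A) \<le> marg v w A"
  proof -
    fix A w assume a: "A \<subseteq> N" "w \<in> R0 - Rs s" "w \<notin> A"
    have "w \<noteq> u" using a u by auto
    then show "marg v w (insert u A) \<le> marg v w A" using sub[of A "insert u A" w] a u R0 by auto
  qed
  have main: "Inv (beta + r/B) R0 s' \<and> Rs s - {u} \<subseteq> Rs s' \<and> S1 s' \<union> S2 s' \<subseteq> insert u (S1 s \<union> S2 s)"
  proof (cases "stopd s")
    case True
    then show ?thesis using I s'_eq by auto
  next
    case ns: False
    show ?thesis
    proof (cases "c u \<le> q")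
      case acc: True
      show ?thesis
      proof (cases "v (insert u Sj) - sum p' (insert u Sj) > r")
        case True
        have s'e: "s' = s\<lparr>prc := p', ust := {u}, stopd := True\<rparr>" using ns acc True s'_eq by simp
        have inv: "Inv k R0 s'" unfolding s'e
          apply (rule InvI)
          using Iu u prc_ok[OF acc] by auto
        then show ?thesis unfolding s'e k_def using Iu by auto
      next
        case nst: False
        show ?thesis
        proof (cases j1)
          case True
          then have sj: "Sj = S1 s" unfolding Sj_def by simp
          have m21: "marg v u (S2 s) \<le> marg v u (S1 s)" using mSj sj m1_def m2_def by auto
          have pp: "PP (insert u (S1 s)) (S2 s)" "PP (S2 s) (insert u (S1 s))"
            using add_lemma[of "S1 s" "S2 s" u] Iu u acc_m[OF acc] sj m21 by auto
          have s'e: "s' = s\<lparr>prc := p', S1 := insert u (S1 s)\<rparr>" using ns acc nst True s'_eq sj by simp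
          have old: "\<forall>w\<in>R0 - Rs s. marg v w (insert u (S1 s)) \<le> k * c w"
            using ins_old[OF Iu(2)] Iu(10) by (meson UnCI order_trans)
          have inv: "Inv k R0 s'" unfolding s'e
            apply (rule InvI)
            using Iu u pp prc_ok[OF acc] old by auto
          then show ?thesis unfolding s'e k_def using Iu by auto
        next
          case False
          then have sj: "Sj = S2 s" unfolding Sj_def by simp
          have m21: "marg v u (S1 s) \<le> marg v u (S2 s)" using mSj sj m1_def m2_def by auto
          have pp: "PP (insert u (S2 s)) (S1 s)" "PP (S1 s) (insert u (S2 s))"
            using add_lemma[of "S2 s" "S1 s" u] Iu u acc_m[OF acc] sj m21 by auto
          have s'e: "s' = s\<lparr>prc := p', S2 := insert u (S2 s)\<rparr>" using ns acc nst False s'_eq sj by simp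
          have old: "\<forall>w\<in>R0 - Rs s. marg v w (insert u (S2 s)) \<le> k * c w"
            using ins_old[OF Iu(3)] Iu(10) by (meson UnCI order_trans)
          have inv: "Inv k R0 s'" unfolding s'e
            apply (rule InvI)
            using Iu u pp prc_ok[OF acc] old by auto
          then show ?thesis unfolding s'e k_def using Iu by auto
        qed
      qed
    next
      case rej: False
      have s'e: "s' = s\<lparr>prc := p', Rs := Rs s - {u}\<rparr>" using ns rej s'_eq by simp
      have "marg v u Sj / k < c u" using rej cu unfolding q_def by linarith
      then have "marg v u Sj < k * c u" using kpos by (simp add: divide_less_eq mult.commute)
      then have newr: "marg v u (S1 s) \<le> k * c u" "marg v u (S2 s) \<le> k * c u"
        using mSj m1_def m2_def by auto
      have prc2: "\<forall>w\<in>Rs s - {u}. c w \<le> p' w" using Iu(7) unfolding p'_def by auto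
      have inv: "Inv k R0 s'" unfolding s'e
        apply (rule InvI)
        using Iu u newr prc2 by auto
      then show ?thesis unfolding s'e k_def using Iu by auto
    qed
  qed
  then show "Inv (beta + r/B) R0 s'" "Rs s - {u} \<subseteq> Rs s'" "S1 s' \<union> S2 s' \<subseteq> insert u (S1 s \<union> S2 s)" by auto
qed


lemma fold_inv:
  assumes r: "r > 0" and R0: "R0 \<subseteq> N"
  shows "distinct L \<Longrightarrow> set L \<subseteq> Rs s \<Longrightarrow> set L \<subseteq> N \<Longrightarrow> set L \<inter> (S1 s \<union> S2 s) = {}
    \<Longrightarrow> Inv (beta + r/B) R0 s \<Longrightarrow> Inv (beta + r/B) R0 (fold (bfm_step v c B beta tie t r) L s)"
proof (induction L arbitrary: s)
  case Nil
  then show ?case by simp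
next
  case (Cons u L)
  have u: "u \<in> Rs s" "u \<in> N" "u \<notin> S1 s \<union> S2 s" using Cons.prems by auto
  note st = step[OF r R0 Cons.prems(5) u, of t]
  have a1: "set L \<subseteq> Rs (bfm_step v c B beta tie t r u s)" using st(2) Cons.prems(1,2) by auto
  have a2: "set L \<inter> (S1 (bfm_step v c B beta tie t r u s) \<union> S2 (bfm_step v c B beta tie t r u s)) = {}"
    using st(3) Cons.prems(1,4) by auto
  have "Inv (beta + r/B) R0 (fold (bfm_step v c B beta tie t r) L (bfm_step v c B beta tie t r u s))"
    using Cons.IH[OF _ a1 _ a2 st(1)] Cons.prems by auto
  then show ?case by simp
qed

definition Gl :: "'a bfm_state \<Rightarrow> bool" where
  "Gl s \<longleftrightarrow> Rs s \<subseteq> N \<and> (\<forall>w\<in>Rs s. c w \<le> prc s w) \<and> ust s \<subseteq> N \<and> (ust s = {} \<or> (\<exists>w. ust s = {w}))"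

lemma round_inv:
  assumes r: "rho eps alpha t > 0" and G: "Gl s"
  shows "Inv (beta + rho eps alpha t / B) (Rs s) (bfm_round order v c B alpha beta eps tie t s)"
proof -
  define L where "L = filter (\<lambda>u. u \<in> Rs s - (S1 s \<union> S2 s \<union> ust s)) order"
  define s0 where "s0 = s\<lparr>S1 := {}, S2 := {}, stopd := False\<rparr>"
  have eq: "bfm_round order v c B alpha beta eps tie t s = fold (bfm_step v c B beta tie t (rho eps alpha t)) L s0"
    unfolding bfm_round_def L_def s0_def Let_def by simp
  have I0: "Inv (beta + rho eps alpha t / B) (Rs s) s0"
    unfolding s0_def using G v0 by (intro InvI) (auto simp: Gl_def PP_def)
  have R0: "Rs s \<subseteq> N" using G Gl_def by auto
  show ?thesis unfolding eq
    by (rule fold_inv[OF r R0]) (use I0 dist in \<open>auto simp: L_def s0_def\<close>)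
qed

lemma Inv_Gl: "Inv k R0 s \<Longrightarrow> R0 \<subseteq> N \<Longrightarrow> Gl s"
  unfolding Inv_def Gl_def by blast

lemma submod_sets:
  assumes "A \<subseteq> N" "C \<subseteq> N"
  shows "v (A \<union> C) + v (A \<inter> C) \<le> v A + v C"
proof -
  have gen: "\<And>D. finite D \<Longrightarrow> D \<subseteq> N \<Longrightarrow> D \<inter> A = {} \<Longrightarrow> v (A \<union> D) - v A \<le> v ((A \<inter> C) \<union> D) - v (A \<inter> C)"
  proof -
    fix D :: "'a set"
    show "finite D \<Longrightarrow> D \<subseteq> N \<Longrightarrow> D \<inter> A = {} \<Longrightarrow> v (A \<union> D) - v A \<le> v ((A \<inter> C) \<union> D) - v (A \<inter> C)"
    proof (induction D rule: finite_induct)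
      case empty
      then show ?case by simp
    next
      case (insert x D)
      have ih: "v (A \<union> D) - v A \<le> v ((A \<inter> C) \<union> D) - v (A \<inter> C)" using insert by auto
      have m: "marg v x (A \<union> D) \<le> marg v x ((A \<inter> C) \<union> D)"
        using sub[of "(A \<inter> C) \<union> D" "A \<union> D" x] insert assms by auto
      then show ?case using ih by (simp add: marg_def)
    qed
  qed
  have fin: "finite (C - A)" using assms(2) finite_subset by (metis finite_Diff finite_set rev_finite_subset)
  have "v (A \<union> (C - A)) - v A \<le> v ((A \<inter> C) \<union> (C - A)) - v (A \<inter> C)"
    using gen[OF fin] assms by auto
  moreover have "A \<union> (C - A) = A \<union> C" "(A \<inter> C) \<union> (C - A) = C" by auto
  ultimately show ?thesis by simp
qed

lemma subadd: "A \<subseteq> N \<Longrightarrow> C \<subseteq> N \<Longrightarrow> v (A \<union> C) \<le> v A + v C"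
proof -
  assume a: "A \<subseteq> N" "C \<subseteq> N"
  have "A \<inter> C \<subseteq> N" using a by auto
  then show ?thesis using submod_sets[OF a] vnn[of "A \<inter> C"] by linarith
qed

lemma subadd_UN: "finite I \<Longrightarrow> (\<forall>i\<in>I. Y i \<subseteq> N) \<Longrightarrow> v (\<Union>i\<in>I. Y i) \<le> (\<Sum>i\<in>I. v (Y i))"
proof (induction I rule: finite_induct)
  case empty
  then show ?case using v0 by simp
next
  case (insert x I)
  have "v (\<Union>i\<in>insert x I. Y i) = v (Y x \<union> (\<Union>i\<in>I. Y i))" by simp
  also have "\<dots> \<le> v (Y x) + v (\<Union>i\<in>I. Y i)" using subadd[of "Y x" "\<Union>i\<in>I. Y i"] insert.prems by auto
  finally show ?case using insert by simp
qed

lemma add_elems: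
  assumes "W \<subseteq> N"
  shows "finite X \<Longrightarrow> X \<subseteq> N \<Longrightarrow> W \<inter> X = {} \<Longrightarrow> v (W \<union> X) \<le> v W + (\<Sum>u\<in>X. marg v u W)"
proof (induction X rule: finite_induct)
  case empty
  then show ?case by simp
next
  case (insert x X)
  have ih: "v (W \<union> X) \<le> v W + (\<Sum>u\<in>X. marg v u W)" using insert by auto
  have m: "marg v x (W \<union> X) \<le> marg v x W" using sub[of W "W \<union> X" x] insert assms by auto
  have "v (W \<union> insert x X) = v (W \<union> X) + marg v x (W \<union> X)" by (simp add: marg_def)
  then show ?case using ih m insert by simp
qed

lemma comb:
  assumes d: "A \<inter> C = {}" "A \<subseteq> N" "C \<subseteq> N" "PP A C" "PP C A" "X \<subseteq> N"
    and X: "\<forall>u\<in>X. u \<notin> A \<union> C \<and> marg v u A \<le> k * c u \<and> marg v u C \<le> k * c u"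
    and T: "T1 \<subseteq> A" "T2 \<subseteq> C"
  shows "v (X \<union> T1 \<union> T2) \<le> 2 * (v A + v C) + 2 * k * sum c X"
proof -
  have finX: "finite X" using d(6) finite_subset by blast
  have one: "v ((AA \<union> TT) \<union> X) \<le> v AA + v CC + k * sum c X" if h: "TT \<subseteq> CC" "PP AA CC" "AA \<inter> CC = {}" "AA \<subseteq> N" "CC \<subseteq> N"
    "\<forall>u\<in>X. u \<notin> AA \<union> CC \<and> marg v u AA \<le> k * c u" for AA CC TT
  proof -
    have hh: "AA \<union> TT \<subseteq> N" "(AA \<union> TT) \<inter> X = {}" using h by auto
    have "v ((AA \<union> TT) \<union> X) \<le> v (AA \<union> TT) + (\<Sum>u\<in>X. marg v u (AA \<union> TT))"
      using add_elems[OF hh(1) finX d(6) hh(2)] by simp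
    also have "(\<Sum>u\<in>X. marg v u (AA \<union> TT)) \<le> (\<Sum>u\<in>X. k * c u)"
    proof (rule sum_mono)
      fix u assume u: "u \<in> X"
      have uu: "TT \<subseteq> N" "u \<in> N" "u \<notin> TT" using h u d(6) by auto
      have "marg v u (AA \<union> TT) \<le> marg v u AA" using sub[of AA "AA \<union> TT" u] hh uu h u by auto
      then show "marg v u (AA \<union> TT) \<le> k * c u" using h u by force
    qed
    also have "v (AA \<union> TT) \<le> v AA + v CC" using h unfolding PP_def by auto
    finally show ?thesis by (simp add: sum_distrib_left)
  qed
  have o1: "v ((A \<union> T2) \<union> X) \<le> v A + v C + k * sum c X" using one[where AA=A and CC=C and TT=T2] T d X by auto
  have o2: "v ((C \<union> T1) \<union> X) \<le> v C + v A + k * sum c X" using one[where AA=C and CC=A and TT=T1] T d X by auto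
  have sm2: "v ((A \<union> T2 \<union> X) \<union> (C \<union> T1 \<union> X)) + v ((A \<union> T2 \<union> X) \<inter> (C \<union> T1 \<union> X)) \<le> v (A \<union> T2 \<union> X) + v (C \<union> T1 \<union> X)"
    using submod_sets[of "A \<union> T2 \<union> X" "C \<union> T1 \<union> X"] d T by auto
  have int: "(A \<union> T2 \<union> X) \<inter> (C \<union> T1 \<union> X) = X \<union> T1 \<union> T2" using d T by auto
  have nn: "v ((A \<union> T2 \<union> X) \<union> (C \<union> T1 \<union> X)) \<ge> 0" using d T by (intro vnn) auto
  show ?thesis using o1 o2 sm2 int nn by simp
qed


lemma main:
  assumes alpha: "alpha > 1" and eps: "eps > 0" and M: "M \<ge> 1"
    and stops: "bfm_stops order v c B alpha beta eps tie M"
    and O: "Opt \<subseteq> N" "sum c Opt \<le> B"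
  shows "v Opt - 2 * beta * sum c Opt \<le> 2 * rho eps alpha M
    + 2 * (\<Sum>t = 1..M. v (S1 (bfm order v c B alpha beta eps tie t)) + v (S2 (bfm order v c B alpha beta eps tie t)))
    + 2 * v (ust (bfm order v c B alpha beta eps tie M))"
proof -
  define st where "st t = bfm order v c B alpha beta eps tie t" for t
  define k where "k t = beta + rho eps alpha t / B" for t
  have rpos: "\<And>t. rho eps alpha t > 0" unfolding rho_def using alpha eps by auto
  have rmono: "\<And>t. t \<le> M \<Longrightarrow> rho eps alpha t \<le> rho eps alpha M"
    unfolding rho_def using alpha eps by (intro mult_left_mono power_increasing) auto
  have kmono: "\<And>t. t \<le> M \<Longrightarrow> k t \<le> k M" unfolding k_def using rmono Bpos by (simp add: divide_right_mono)
  have kMpos: "k M \<ge> 0" unfolding k_def using rpos[of M] Bpos bpos by (smt (verit) divide_pos_pos)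
  have Gall: "\<And>t. Gl (st t)"
  proof -
    fix t show "Gl (st t)"
    proof (induction t)
      case 0 show ?case unfolding st_def Gl_def by auto
    next
      case (Suc n)
      have "Inv (k (Suc n)) (Rs (st n)) (st (Suc n))"
        unfolding st_def k_def using round_inv[OF rpos Suc[unfolded st_def]] by simp
      moreover have "Rs (st n) \<subseteq> N" using Suc unfolding Gl_def by blast
      ultimately show ?case using Inv_Gl by blast
    qed
  qed
  have Iall: "\<And>n. Inv (k (Suc n)) (Rs (st n)) (st (Suc n))"
    unfolding st_def k_def using round_inv[OF rpos Gall[unfolded st_def]] by simp
  define Q where "Q u t \<longleftrightarrow> u \<notin> S1 (st t) \<union> S2 (st t) \<and> marg v u (S1 (st t)) \<le> k t * c u \<and> marg v u (S2 (st t)) \<le> k t * c u" for u t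
  have G3: "\<And>n u. u \<in> Rs (st 0) \<Longrightarrow> u \<notin> Rs (st n) \<Longrightarrow> \<exists>t\<in>{1..n}. Q u t"
  proof -
    fix n u show "u \<in> Rs (st 0) \<Longrightarrow> u \<notin> Rs (st n) \<Longrightarrow> \<exists>t\<in>{1..n}. Q u t"
    proof (induction n)
      case 0 then show ?case by simp
    next
      case (Suc n)
      show ?case
      proof (cases "u \<in> Rs (st n)")
        case True
        then have "Q u (Suc n)" using Iall[of n] Suc.prems unfolding Inv_def Q_def by auto
        then show ?thesis by force
      next
        case False
        then obtain t where "t \<in> {1..n}" "Q u t" using Suc by auto
        then show ?thesis by (intro bexI[of _ t]) auto
      qed
    qed
  qed
  have finO: "finite Opt" using O(1) finite_subset by blast
  have cO: "\<And>u. u \<in> Opt \<Longrightarrow> c u \<le> B"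
  proof -
    fix u assume u: "u \<in> Opt"
    have "c u \<le> sum c Opt" using member_le_sum[of u Opt c] u finO cnn O(1) by auto
    then show "c u \<le> B" using O by linarith
  qed
  have O0: "Opt \<subseteq> Rs (st 0)" unfolding st_def using O(1) cO by auto
  define r where "r u = (SOME t. t \<in> {1..M} \<and> Q u t)" for u
  define RM where "RM = Rs (st M)"
  have rprop: "\<And>u. u \<in> Opt \<Longrightarrow> u \<notin> RM \<Longrightarrow> r u \<in> {1..M} \<and> Q u (r u)"
  proof -
    fix u assume u: "u \<in> Opt" "u \<notin> RM"
    have "u \<in> Rs (st 0)" "u \<notin> Rs (st M)" using u O0 RM_def by auto
    then obtain t where "t \<in> {1..M}" "Q u t" using G3[of u M] by blast
    then have "\<exists>t. t \<in> {1..M} \<and> Q u t" by blast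
    then show "r u \<in> {1..M} \<and> Q u (r u)" unfolding r_def by (rule someI_ex)
  qed
  define X where "X t = {u \<in> Opt. u \<notin> RM \<and> r u = t}" for t
  define Y where "Y t = X t \<union> (Opt \<inter> S1 (st t)) \<union> (Opt \<inter> S2 (st t))" for t
  have stopsM: "RM - (S1 (st (M-1)) \<union> S2 (st (M-1)) \<union> S1 (st M) \<union> S2 (st M) \<union> ust (st M)) = {}"
    using stops unfolding bfm_stops_def Let_def st_def RM_def by simp
  have st0: "S1 (st 0) = {}" "S2 (st 0) = {}" unfolding st_def by auto
  have cover: "Opt = (\<Union>t\<in>{1..M}. Y t) \<union> (Opt \<inter> ust (st M))"
  proof
    show "(\<Union>t\<in>{1..M}. Y t) \<union> (Opt \<inter> ust (st M)) \<subseteq> Opt" unfolding Y_def X_def by auto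
    show "Opt \<subseteq> (\<Union>t\<in>{1..M}. Y t) \<union> (Opt \<inter> ust (st M))"
    proof
      fix u assume u: "u \<in> Opt"
      show "u \<in> (\<Union>t\<in>{1..M}. Y t) \<union> (Opt \<inter> ust (st M))"
      proof (cases "u \<in> RM")
        case False
        then have "r u \<in> {1..M}" "u \<in> X (r u)" using rprop u unfolding X_def by auto
        then show ?thesis unfolding Y_def by blast
      next
        case True
        then have "u \<in> S1 (st (M-1)) \<union> S2 (st (M-1)) \<union> S1 (st M) \<union> S2 (st M) \<union> ust (st M)" using stopsM by blast
        moreover have "u \<in> S1 (st (M-1)) \<union> S2 (st (M-1)) \<Longrightarrow> M - 1 \<in> {1..M}" using st0 M by (cases "M - 1 = 0") auto
        moreover have "M \<in> {1..M}" using M by auto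
        ultimately show ?thesis using u unfolding Y_def by blast
      qed
    qed
  qed
  have YN: "\<forall>t\<in>{1..M}. Y t \<subseteq> N" unfolding Y_def X_def using O(1) by auto
  have ustN: "Opt \<inter> ust (st M) \<subseteq> N" using O(1) by auto
  have v1: "v Opt \<le> (\<Sum>t\<in>{1..M}. v (Y t)) + v (Opt \<inter> ust (st M))"
  proof -
    have e: "v Opt = v ((\<Union>t\<in>{1..M}. Y t) \<union> (Opt \<inter> ust (st M)))" by (rule arg_cong[OF cover])
    have UN: "(\<Union>t\<in>{1..M}. Y t) \<subseteq> N" using YN by auto
    have "v Opt \<le> v (\<Union>t\<in>{1..M}. Y t) + v (Opt \<inter> ust (st M))"
      unfolding e by (rule subadd[OF UN ustN])
    then show ?thesis using subadd_UN[of "{1..M}" Y] YN by simp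
  qed
  have vY: "\<And>t. t \<in> {1..M} \<Longrightarrow> v (Y t) \<le> 2 * (v (S1 (st t)) + v (S2 (st t))) + 2 * k M * sum c (X t)"
  proof -
    fix t assume t: "t \<in> {1..M}"
    then obtain n where n: "t = Suc n" by (cases t) auto
    have I: "Inv (k t) (Rs (st n)) (st t)" using Iall[of n] n by simp
    have XQ: "\<forall>u\<in>X t. u \<notin> S1 (st t) \<union> S2 (st t) \<and> marg v u (S1 (st t)) \<le> k t * c u \<and> marg v u (S2 (st t)) \<le> k t * c u"
    proof
      fix u assume "u \<in> X t"
      then have "Q u t" using rprop unfolding X_def by auto
      then show "u \<notin> S1 (st t) \<union> S2 (st t) \<and> marg v u (S1 (st t)) \<le> k t * c u \<and> marg v u (S2 (st t)) \<le> k t * c u"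
        unfolding Q_def by auto
    qed
    have XN: "X t \<subseteq> N" unfolding X_def using O(1) by auto
    have a: "v (Y t) \<le> 2 * (v (S1 (st t)) + v (S2 (st t))) + 2 * k t * sum c (X t)"
      unfolding Y_def using I XQ XN by (intro comb) (auto simp: Inv_def)
    have "k t * sum c (X t) \<le> k M * sum c (X t)"
      using kmono t XN cnn by (intro mult_right_mono sum_nonneg) auto
    then show "v (Y t) \<le> 2 * (v (S1 (st t)) + v (S2 (st t))) + 2 * k M * sum c (X t)" using a by linarith
  qed
  have sumX: "(\<Sum>t\<in>{1..M}. sum c (X t)) \<le> sum c Opt"
  proof -
    have "(\<Sum>t\<in>{1..M}. sum c (X t)) = sum c (\<Union>t\<in>{1..M}. X t)"
      by (rule sum.UNION_disjoint[symmetric]) (auto simp: X_def intro: finite_subset[OF _ finO])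
    also have "\<dots> \<le> sum c Opt" by (rule sum_mono2[OF finO]) (use O(1) cnn in \<open>auto simp: X_def\<close>)
    finally show ?thesis .
  qed
  have ust: "v (Opt \<inter> ust (st M)) \<le> 2 * v (ust (st M))"
  proof -
    have g: "ust (st M) \<subseteq> N" "ust (st M) = {} \<or> (\<exists>w. ust (st M) = {w})" using Gall[of M] unfolding Gl_def by auto
    have nn: "v (ust (st M)) \<ge> 0" using vnn g by auto
    show ?thesis
    proof (cases "ust (st M) = {}")
      case True then show ?thesis using v0 by simp
    next
      case False
      then obtain w where w: "ust (st M) = {w}" using g by auto
      show ?thesis using w nn v0 by (cases "w \<in> Opt") auto
    qed
  qed
  have s1: "(\<Sum>t\<in>{1..M}. v (Y t)) \<le> (\<Sum>t\<in>{1..M}. 2 * (v (S1 (st t)) + v (S2 (st t))) + 2 * k M * sum c (X t))"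
    by (rule sum_mono) (rule vY)
  have s2: "(\<Sum>t\<in>{1..M}. 2 * (v (S1 (st t)) + v (S2 (st t))) + 2 * k M * sum c (X t))
      = 2 * (\<Sum>t\<in>{1..M}. v (S1 (st t)) + v (S2 (st t))) + 2 * k M * (\<Sum>t\<in>{1..M}. sum c (X t))"
    by (simp add: sum.distrib sum_distrib_left)
  have s3: "k M * (\<Sum>t\<in>{1..M}. sum c (X t)) \<le> k M * sum c Opt"
    using mult_left_mono[OF sumX kMpos] .
  have cOnn: "sum c Opt \<ge> 0" using O(1) cnn by (intro sum_nonneg) auto
  have s4: "k M * sum c Opt \<le> beta * sum c Opt + rho eps alpha M"
  proof -
    have "rho eps alpha M * (sum c Opt / B) \<le> rho eps alpha M * 1"
      using rpos[of M] O(2) Bpos cOnn by (intro mult_left_mono) auto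
    then show ?thesis unfolding k_def by (simp add: algebra_simps)
  qed
  have fin: "v Opt - 2 * beta * sum c Opt \<le> 2 * rho eps alpha M + 2 * (\<Sum>t\<in>{1..M}. v (S1 (st t)) + v (S2 (st t))) + 2 * v (ust (st M))"
    using v1 s1 s2 s3 s4 ust by linarith
  then show ?thesis unfolding st_def .
qed

end
theorem lemma4p3:
  fixes order :: "'a list" and v :: "'a set \<Rightarrow> real" and c :: "'a \<Rightarrow> real"
    and B alpha beta eps :: real
    and tie :: "nat \<Rightarrow> 'a set \<Rightarrow> 'a set \<Rightarrow> 'a \<Rightarrow> bool"
    and M :: nat and Opt :: "'a set"
  assumes "distinct order"
    and "v {} = 0"
    and "\<forall>S. S \<subseteq> set order \<longrightarrow> v S \<ge> 0"
    and "submodular_on (set order) v"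
    and "\<forall>u \<in> set order. c u \<ge> 0"
    and "B > 0" and "alpha > 1" and "beta > 1" and "eps > 0"
    and "M \<ge> 1"
    and "bfm_stops order v c B alpha beta eps tie M"
    and "\<forall>t. 1 \<le> t \<and> t < M \<longrightarrow> \<not> bfm_stops order v c B alpha beta eps tie t"
    and "Opt \<subseteq> set order" and "sum c Opt \<le> B"
    and "\<forall>S. S \<subseteq> set order \<and> sum c S \<le> B \<longrightarrow> v S - sum c S \<le> v Opt - sum c Opt"
  shows "v Opt - 2 * beta * sum c Opt \<le>
    2 * rho eps alpha M
    + 2 * (\<Sum>t = 1..M. v (S1 (bfm order v c B alpha beta eps tie t))
                      + v (S2 (bfm order v c B alpha beta eps tie t)))
    + 2 * v (ust (bfm order v c B alpha beta eps tie M))"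
proof -
  interpret bfmL order v c B beta tie using assms by unfold_locales auto
  show ?thesis using main[OF assms(7) assms(9) assms(10) assms(11) assms(13) assms(14)] .
qed

end
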